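(* Let $\gamma$ be an analytic split-Fourier curve, $\gamma(\theta)=(\gamma_1+k'\gamma_2,\gamma_3)=\big(\sum_{n=-\infty}^{\infty}c_ne^{k'n\theta},\sum_{n=-\infty}^{\infty}d_ne^{k'n\theta}\big)$. Then the coefficients $c_n$ and $d_n$ are uniquely determined by $\gamma$.
   Context: $\mathbb{C}'$ denotes the split-complex numbers $x+k'y$, $k'^2=1$, and $e^{k'\theta}=\cosh\theta+k'\sinh\theta$. $\mathbb{L}^3$ ($\mathbb{R}^3$ with metric $-dx^2+dy^2+dz^2$) is identified with $\mathbb{C}'\times\mathbb{R}$ via $(x,y,z)\leftrightarrow(x+k'y,z)$. A curve $\gamma:\mathbb{H}^1\to\mathbb{L}^3$ (with $\mathbb{H}^1=\{e^{k'\theta}:\theta\in\mathbb{R}\}$, parametrized by $\theta$) is a split-Fourier curve if it has an expansion $\gamma(\theta)=\big(\sum_n c_ne^{k'n\theta},\sum_n d_ne^{k'n\theta}\big)$ with $c_n,d_n\in\mathbb{C}'$, only finitely many nonzero, and with $\gamma_3=\sum_nd_ne^{k'n\theta}$ real-valued. Analytic means each component is locally given by a convergent power series. *)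

theory Defs
  imports "HOL-Analysis.Analysis"
begin

text \<open>Split-complex numbers x + k'y (k'^2 = 1) are represented as pairs (x, y) of reals,
  with componentwise addition (the library's product-type addition) and the multiplication below.\<close>

type_synonym splitc = "real \<times> real"

definition splitc_mult :: "splitc \<Rightarrow> splitc \<Rightarrow> splitc" where
  "splitc_mult z w = (fst z * fst w + snd z * snd w, fst z * snd w + snd z * fst w)"

text \<open>e^{k' t} = cosh t + k' sinh t\<close>
definition splitc_exp :: "real \<Rightarrow> splitc" where
  "splitc_exp t = (cosh t, sinh t)"

definition split_fourier_sum :: "(int \<Rightarrow> splitc) \<Rightarrow> real \<Rightarrow> splitc" where
  "split_fourier_sum c \<theta> = (\<Sum>n\<in>{n. c n \<noteq> 0}. splitc_mult (c n) (splitc_exp (of_int n * \<theta>)))"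

text \<open>A curve in L^3 = C' x R, parametrized by \<theta>: \<gamma> \<theta> = ((\<gamma>1 \<theta>, \<gamma>2 \<theta>), \<gamma>3 \<theta>).
  (c, d) is a split-Fourier expansion of \<gamma>: finitely many nonzero coefficients,
  first component equals \<Sum> c_n e^{k'n\<theta>}, and \<Sum> d_n e^{k'n\<theta>} equals the real number \<gamma>3 \<theta>.\<close>
definition split_fourier_expansion ::
    "(real \<Rightarrow> splitc \<times> real) \<Rightarrow> (int \<Rightarrow> splitc) \<Rightarrow> (int \<Rightarrow> splitc) \<Rightarrow> bool" where
  "split_fourier_expansion \<gamma> c d \<longleftrightarrow>
     finite {n. c n \<noteq> 0} \<and> finite {n. d n \<noteq> 0} \<and>
     (\<forall>\<theta>. fst (\<gamma> \<theta>) = split_fourier_sum c \<theta>) \<and>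
     (\<forall>\<theta>. split_fourier_sum d \<theta> = (snd (\<gamma> \<theta>), 0))"

definition split_fourier_curve :: "(real \<Rightarrow> splitc \<times> real) \<Rightarrow> bool" where
  "split_fourier_curve \<gamma> \<longleftrightarrow> (\<exists>c d. split_fourier_expansion \<gamma> c d)"

definition real_analytic :: "(real \<Rightarrow> real) \<Rightarrow> bool" where
  "real_analytic f \<longleftrightarrow> (\<forall>x. \<exists>r>0. \<exists>a::nat \<Rightarrow> real.
      \<forall>y. \<bar>y - x\<bar> < r \<longrightarrow> (\<lambda>k. a k * (y - x) ^ k) sums f y)"

definition analytic_curve :: "(real \<Rightarrow> splitc \<times> real) \<Rightarrow> bool" where
  "analytic_curve \<gamma> \<longleftrightarrow> real_analytic (\<lambda>\<theta>. fst (fst (\<gamma> \<theta>))) \<and>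
     real_analytic (\<lambda>\<theta>. snd (fst (\<gamma> \<theta>))) \<and> real_analytic (\<lambda>\<theta>. snd (\<gamma> \<theta>))"

end

theory Submission
  imports Defs "HOL-Analysis.Analysis"
begin

lemma exp_neg_lim:
  fixes a :: real assumes "a < 0"
  shows "((\<lambda>t. exp (a * t)) \<longlongrightarrow> 0) at_top"
proof -
  have "filterlim (\<lambda>t. a * t) at_bot at_top"
    using assms by (intro filterlim_tendsto_neg_mult_at_bot[OF tendsto_const]) (auto simp: filterlim_ident)
  then show ?thesis using exp_at_bot filterlim_compose by blast
qed

lemma exp_indep:
  "finite S \<Longrightarrow> (\<forall>\<theta>. (\<Sum>n\<in>S. p n * exp (real_of_int n * \<theta>)) = (0::real)) \<Longrightarrow> \<forall>n\<in>S. p n = 0"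
proof (induction "card S" arbitrary: S)
  case 0
  then show ?case by simp
next
  case (Suc k)
  then have ne: "S \<noteq> {}" by auto
  define M where "M = Max S"
  have MS: "M \<in> S" using Suc ne M_def by simp
  have le: "\<And>n. n \<in> S - {M} \<Longrightarrow> n < M"
    using Suc.prems M_def by (metis DiffE Max_ge insertI1 order_le_less)
  have eq: "\<And>\<theta>. p M + (\<Sum>n\<in>S-{M}. p n * exp (real_of_int (n - M) * \<theta>)) = 0"
  proof -
    fix \<theta>
    have "(\<Sum>n\<in>S. p n * exp (real_of_int n * \<theta>)) = p M * exp (real_of_int M * \<theta>) + (\<Sum>n\<in>S-{M}. p n * exp (real_of_int n * \<theta>))"
      using Suc.prems(1) MS by (simp add: sum.remove)
    hence "exp (- real_of_int M * \<theta>) * (p M * exp (real_of_int M * \<theta>) + (\<Sum>n\<in>S-{M}. p n * exp (real_of_int n * \<theta>))) = 0"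
      using Suc.prems(2) by simp
    moreover have "exp (- real_of_int M * \<theta>) * (p M * exp (real_of_int M * \<theta>) + (\<Sum>n\<in>S-{M}. p n * exp (real_of_int n * \<theta>)))
        = p M + (\<Sum>n\<in>S-{M}. p n * exp (real_of_int (n - M) * \<theta>))"
      by (simp add: distrib_left sum_distrib_left algebra_simps flip: exp_add)
    ultimately show "p M + (\<Sum>n\<in>S-{M}. p n * exp (real_of_int (n - M) * \<theta>)) = 0" by simp
  qed
  have lim: "((\<lambda>\<theta>. p M + (\<Sum>n\<in>S-{M}. p n * exp (real_of_int (n - M) * \<theta>))) \<longlongrightarrow> p M + (\<Sum>n\<in>S-{M}. p n * 0)) at_top"
    apply (intro tendsto_intros)
    apply (rule exp_neg_lim)
    using le by simp
  have fe: "(\<lambda>\<theta>. p M + (\<Sum>n\<in>S-{M}. p n * exp (real_of_int (n - M) * \<theta>))) = (\<lambda>_. 0)" using eq by auto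
  have "((\<lambda>\<theta>::real. 0::real) \<longlongrightarrow> p M) at_top" using lim unfolding fe by simp
  hence pM: "p M = 0" using tendsto_const tendsto_unique trivial_limit_at_top_linorder by metis
  have "\<forall>n\<in>S-{M}. p n = 0"
  proof (rule Suc.hyps(1))
    show "k = card (S - {M})" using Suc.hyps(2) MS Suc.prems(1) by simp
    show "finite (S - {M})" using Suc.prems(1) by simp
    show "\<forall>\<theta>. (\<Sum>n\<in>S-{M}. p n * exp (real_of_int n * \<theta>)) = 0"
    proof
      fix \<theta>
      have "(\<Sum>n\<in>S. p n * exp (real_of_int n * \<theta>)) = p M * exp (real_of_int M * \<theta>) + (\<Sum>n\<in>S-{M}. p n * exp (real_of_int n * \<theta>))"
        using Suc.prems(1) MS by (simp add: sum.remove)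
      then show "(\<Sum>n\<in>S-{M}. p n * exp (real_of_int n * \<theta>)) = 0" using pM Suc.prems(2) by simp
    qed
  qed
  then show ?case using pM by auto
qed

lemma sfs_ext:
  assumes "finite A" "{n. c n \<noteq> 0} \<subseteq> A"
  shows "split_fourier_sum c \<theta> = (\<Sum>n\<in>A. splitc_mult (c n) (splitc_exp (of_int n * \<theta>)))"
  unfolding split_fourier_sum_def
  by (rule sum.mono_neutral_left) (use assms in \<open>auto simp: splitc_mult_def prod_eq_iff\<close>)

lemma fs_plus: "fst (\<Sum>n\<in>A. splitc_mult (c n) (splitc_exp (x n))) + snd (\<Sum>n\<in>A. splitc_mult (c n) (splitc_exp (x n))) = (\<Sum>n\<in>A. (fst (c n) + snd (c n)) * exp (x n))"
  unfolding fst_sum snd_sum sum.distrib[symmetric]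
  by (rule sum.cong) (simp_all add: splitc_mult_def splitc_exp_def algebra_simps flip: cosh_plus_sinh)
lemma fs_minus: "fst (\<Sum>n\<in>A. splitc_mult (c n) (splitc_exp (x n))) - snd (\<Sum>n\<in>A. splitc_mult (c n) (splitc_exp (x n))) = (\<Sum>n\<in>A. (fst (c n) - snd (c n)) * exp (- x n))"
  unfolding fst_sum snd_sum sum_subtractf[symmetric]
  by (rule sum.cong) (simp_all add: splitc_mult_def splitc_exp_def algebra_simps flip: cosh_minus_sinh)

lemma sfs_unique:
  assumes fc: "finite {n. c n \<noteq> 0}" and fc': "finite {n. c' n \<noteq> 0}"
    and eq: "\<And>\<theta>. split_fourier_sum c \<theta> = split_fourier_sum c' \<theta>"
  shows "c = c'"
proof -
  define A where "A = {n. c n \<noteq> 0} \<union> {n. c' n \<noteq> 0}"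
  have fA: "finite A" using fc fc' A_def by simp
  have E: "\<And>\<theta>. (\<Sum>n\<in>A. splitc_mult (c n) (splitc_exp (of_int n * \<theta>))) = (\<Sum>n\<in>A. splitc_mult (c' n) (splitc_exp (of_int n * \<theta>)))"
    using eq sfs_ext[OF fA, of c] sfs_ext[OF fA, of c'] A_def by auto
  have P: "\<forall>\<theta>. (\<Sum>n\<in>A. ((fst (c n) + snd (c n)) - (fst (c' n) + snd (c' n))) * exp (real_of_int n * \<theta>)) = 0"
  proof
    fix \<theta>
    have "fst (\<Sum>n\<in>A. splitc_mult (c n) (splitc_exp (of_int n * \<theta>))) + snd (\<Sum>n\<in>A. splitc_mult (c n) (splitc_exp (of_int n * \<theta>)))
       = fst (\<Sum>n\<in>A. splitc_mult (c' n) (splitc_exp (of_int n * \<theta>))) + snd (\<Sum>n\<in>A. splitc_mult (c' n) (splitc_exp (of_int n * \<theta>)))"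
      using E by simp
    hence "(\<Sum>n\<in>A. (fst (c n) + snd (c n)) * exp (real_of_int n * \<theta>)) = (\<Sum>n\<in>A. (fst (c' n) + snd (c' n)) * exp (real_of_int n * \<theta>))"
      by (simp only: fs_plus)
    thus "(\<Sum>n\<in>A. ((fst (c n) + snd (c n)) - (fst (c' n) + snd (c' n))) * exp (real_of_int n * \<theta>)) = 0"
      by (simp add: left_diff_distrib sum_subtractf)
  qed
  have Q: "\<forall>\<theta>. (\<Sum>n\<in>A. ((fst (c n) - snd (c n)) - (fst (c' n) - snd (c' n))) * exp (real_of_int n * \<theta>)) = 0"
  proof
    fix \<theta>
    have "fst (\<Sum>n\<in>A. splitc_mult (c n) (splitc_exp (of_int n * -\<theta>))) - snd (\<Sum>n\<in>A. splitc_mult (c n) (splitc_exp (of_int n * -\<theta>)))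
       = fst (\<Sum>n\<in>A. splitc_mult (c' n) (splitc_exp (of_int n * -\<theta>))) - snd (\<Sum>n\<in>A. splitc_mult (c' n) (splitc_exp (of_int n * -\<theta>)))"
      using E[of "-\<theta>"] by (simp only:)
    hence "(\<Sum>n\<in>A. (fst (c n) - snd (c n)) * exp (real_of_int n * \<theta>)) = (\<Sum>n\<in>A. (fst (c' n) - snd (c' n)) * exp (real_of_int n * \<theta>))"
      by (simp only: fs_minus mult_minus_right minus_minus)
    thus "(\<Sum>n\<in>A. ((fst (c n) - snd (c n)) - (fst (c' n) - snd (c' n))) * exp (real_of_int n * \<theta>)) = 0"
      by (simp add: left_diff_distrib sum_subtractf)
  qed
  have "\<And>n. c n = c' n"
  proof -
    fix n
    show "c n = c' n"
    proof (cases "n \<in> A")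
      case True
      then have "fst (c n) + snd (c n) - (fst (c' n) + snd (c' n)) = 0" "fst (c n) - snd (c n) - (fst (c' n) - snd (c' n)) = 0"
        using exp_indep[OF fA P] exp_indep[OF fA Q] by auto
      then show ?thesis by (simp add: prod_eq_iff)
    next
      case False
      then show ?thesis using A_def by auto
    qed
  qed
  thus ?thesis by auto
qed

theorem theorem5p1:
  fixes \<gamma> :: "real \<Rightarrow> splitc \<times> real"
  assumes "analytic_curve \<gamma>"
    and "split_fourier_curve \<gamma>"
    and "split_fourier_expansion \<gamma> c d"
    and "split_fourier_expansion \<gamma> c' d'"
  shows "c = c' \<and> d = d'"
proof
  show "c = c'" using assms(3,4) unfolding split_fourier_expansion_def
    by (intro sfs_unique) auto
  show "d = d'" using assms(3,4) unfolding split_fourier_expansion_def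
    by (intro sfs_unique) auto
qed

end
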